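(* Let $(G,g)$ be a six-dimensional semi-Riemannian Lie group with a subgroup $K\cong\mathrm{SU}(2)\times\mathrm{SO}(2)$, and let $\mathcal F$ be the left-invariant foliation generated by $K$, with tangent distribution $\mathcal V$. Let $\{A,B,C,T,X,Y\}$ be an orthonormal basis of the Lie algebra $\mathfrak g$ of $G$ such that $A,B,C$ span $\mathfrak{su}(2)$ with $[A,B]=2C$, $[C,A]=2B$, $[B,C]=2A$, $T$ spans $\mathfrak{so}(2)$ (so $X,Y$ span the orthogonal complement of $\mathfrak{su}(2)\times\mathfrak{so}(2)$), and suppose the remaining brackets have the form $[E,X]=e_{11}A+e_{12}B+e_{13}C+e_{14}T$, $[E,Y]=e_{21}A+e_{22}B+e_{23}C+e_{24}T$ for $E\in\{A,B,C\}$, $[T,X]=x_1X+y_1Y+t_{11}A+t_{12}B+t_{13}C+t_{14}T$, $[T,Y]=x_2X+y_2Y+t_{21}A+t_{22}B+t_{23}C+t_{24}T$, $[X,Y]=\rho X+\theta_1A+\theta_2B+\theta_3C+\theta_4T$, with real coefficients. Then $\mathcal F$ is conformal if and only if $$x_1=y_2\quad\text{and}\quad \varepsilon_Xx_2+\varepsilon_Yy_1=0.$$ In that case, $\mathcal F$ is semi-Riemannian if and only if $x_1=y_2=0$.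
   Context: A semi-Riemannian Lie group $(G,g)$ is a Lie group with a left-invariant non-degenerate metric $g$ of arbitrary signature; its Lie algebra is identified with the left-invariant vector fields. $K$ generates the foliation $\mathcal F$ by its left translates; $\mathcal V$ is spanned by the Lie algebra of $K$ and $\mathcal H$ (spanned by $X,Y$) is its orthogonal complement. Orthonormal means $g(E_i,E_j)=\varepsilon_{E_i}\delta_{ij}$ with $\varepsilon_{E_i}=g(E_i,E_i)\in\{\pm1\}$. With $\nabla$ the Levi-Civita connection and $\mathcal V$ also the orthogonal projection, $B^{\mathcal H}(E,F)=\tfrac12\mathcal V(\nabla_EF+\nabla_FE)$ for $E,F\in\mathcal H$. $\mathcal F$ is conformal if there is a vector field $V$ in $\mathcal V$ with $B^{\mathcal H}(E,F)=g(E,F)V$ for all $E,F\in\mathcal H$, and semi-Riemannian if $B^{\mathcal H}=0$. *)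

theory Defs
  imports Complex_Main
begin

text \<open>Index type for the orthonormal basis {A,B,C,T,X,Y} of the six-dimensional
  Lie algebra g. Elements of g are represented by their coordinates in this basis.\<close>

datatype idx = iA | iB | iC | iT | iX | iY

lemma UNIV_idx: "(UNIV :: idx set) = {iA, iB, iC, iT, iX, iY}"
  using idx.exhaust by auto

instance idx :: finite
  by standard (simp add: UNIV_idx)

type_synonym vec = "idx \<Rightarrow> real"

definition bas :: "idx \<Rightarrow> vec" where
  "bas i = (\<lambda>k. if k = i then 1 else 0)"

text \<open>Bilinear bracket determined by structure constants: c i j k is the
  e_k-coefficient of [e_i, e_j].\<close>
definition br :: "(idx \<Rightarrow> idx \<Rightarrow> idx \<Rightarrow> real) \<Rightarrow> vec \<Rightarrow> vec \<Rightarrow> vec" where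
  "br c u v = (\<lambda>k. \<Sum>i\<in>UNIV. \<Sum>j\<in>UNIV. u i * v j * c i j k)"

definition gm :: "(idx \<Rightarrow> real) \<Rightarrow> vec \<Rightarrow> vec \<Rightarrow> real" where
  "gm eps u v = (\<Sum>i\<in>UNIV. eps i * u i * v i)"

text \<open>Levi-Civita connection on left-invariant vector fields, determined by
  the Koszul formula 2 g(nabla_U V, Z) = g([U,V],Z) - g([V,Z],U) + g([Z,U],V).\<close>
definition nabla :: "(idx \<Rightarrow> idx \<Rightarrow> idx \<Rightarrow> real) \<Rightarrow> (idx \<Rightarrow> real) \<Rightarrow> vec \<Rightarrow> vec \<Rightarrow> vec" where
  "nabla c eps u v = (THE w. \<forall>z. 2 * gm eps w z =
      gm eps (br c u v) z - gm eps (br c v z) u + gm eps (br c z u) v)"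

text \<open>The vertical distribution V = span{A,B,C,T} (Lie algebra of K) and
  its orthogonal complement H = span{X,Y}.\<close>
definition Vsp :: "vec set" where
  "Vsp = {u. u iX = 0 \<and> u iY = 0}"

definition Hsp :: "vec set" where
  "Hsp = {u. u iA = 0 \<and> u iB = 0 \<and> u iC = 0 \<and> u iT = 0}"

text \<open>Orthogonal projection onto V (the basis is orthonormal).\<close>
definition Vproj :: "vec \<Rightarrow> vec" where
  "Vproj u = (\<lambda>k. if k = iX \<or> k = iY then 0 else u k)"

definition BH :: "(idx \<Rightarrow> idx \<Rightarrow> idx \<Rightarrow> real) \<Rightarrow> (idx \<Rightarrow> real) \<Rightarrow> vec \<Rightarrow> vec \<Rightarrow> vec" where
  "BH c eps E F = (\<lambda>k. (1/2) * Vproj (\<lambda>l. nabla c eps E F l + nabla c eps F E l) k)"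

definition conformal_fol :: "(idx \<Rightarrow> idx \<Rightarrow> idx \<Rightarrow> real) \<Rightarrow> (idx \<Rightarrow> real) \<Rightarrow> bool" where
  "conformal_fol c eps \<longleftrightarrow> (\<exists>V\<in>Vsp. \<forall>E\<in>Hsp. \<forall>F\<in>Hsp.
      BH c eps E F = (\<lambda>k. gm eps E F * V k))"

definition semi_riem_fol :: "(idx \<Rightarrow> idx \<Rightarrow> idx \<Rightarrow> real) \<Rightarrow> (idx \<Rightarrow> real) \<Rightarrow> bool" where
  "semi_riem_fol c eps \<longleftrightarrow> (\<forall>E\<in>Hsp. \<forall>F\<in>Hsp. BH c eps E F = (\<lambda>k. 0))"

definition lie_constants :: "(idx \<Rightarrow> idx \<Rightarrow> idx \<Rightarrow> real) \<Rightarrow> bool" where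
  "lie_constants c \<longleftrightarrow> (\<forall>u. br c u u = (\<lambda>k. 0)) \<and>
     (\<forall>u v w. (\<lambda>k. br c u (br c v w) k + br c v (br c w u) k + br c w (br c u v) k) = (\<lambda>k. 0))"

end

theory Submission
  imports Defs
begin

lemma gm_bas: "gm eps a (bas k) = eps k * a k"
  by (cases k) (simp_all add: gm_def bas_def UNIV_idx)

lemma br_bas: "br c (bas i) (bas j) = c i j"
  by (rule ext, cases i; cases j; simp add: br_def bas_def UNIV_idx)

lemma br_bas2: "br c v (bas k) l = (\<Sum>i\<in>UNIV. v i * c i k l)"
  by (cases k; simp add: br_def bas_def UNIV_idx)

lemma br_bas1: "br c (bas k) u l = (\<Sum>j\<in>UNIV. u j * c k j l)"
  by (cases k; simp add: br_def bas_def UNIV_idx)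

lemma gm_lin2: "gm eps a z = (\<Sum>k\<in>UNIV. z k * gm eps a (bas k))"
  by (simp only: gm_bas) (simp add: gm_def algebra_simps)

lemma br_lin2: "br c v z = (\<lambda>l. \<Sum>k\<in>UNIV. z k * br c v (bas k) l)"
proof
  fix l
  have "(\<Sum>k\<in>UNIV. z k * br c v (bas k) l) = (\<Sum>k\<in>UNIV. \<Sum>i\<in>UNIV. v i * z k * c i k l)"
    by (simp only: br_bas2 sum_distrib_left) (simp add: algebra_simps)
  also have "\<dots> = (\<Sum>i\<in>UNIV. \<Sum>k\<in>UNIV. v i * z k * c i k l)" by (rule sum.swap)
  also have "\<dots> = br c v z l" by (simp add: br_def)
  finally show "br c v z l = (\<Sum>k\<in>UNIV. z k * br c v (bas k) l)" by simp
qed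

lemma br_lin1: "br c z u = (\<lambda>l. \<Sum>k\<in>UNIV. z k * br c (bas k) u l)"
proof
  fix l
  have "(\<Sum>k\<in>UNIV. z k * br c (bas k) u l) = (\<Sum>k\<in>UNIV. \<Sum>j\<in>UNIV. z k * u j * c k j l)"
    by (simp only: br_bas1 sum_distrib_left) (simp add: algebra_simps)
  also have "\<dots> = br c z u l" by (simp add: br_def)
  finally show "br c z u l = (\<Sum>k\<in>UNIV. z k * br c (bas k) u l)" by simp
qed

lemma gm_lin1: "gm eps (\<lambda>l. \<Sum>k\<in>UNIV. z k * f k l) u = (\<Sum>k\<in>UNIV. z k * gm eps (f k) u)"
proof -
  have "gm eps (\<lambda>l. \<Sum>k\<in>UNIV. z k * f k l) u = (\<Sum>i\<in>UNIV. \<Sum>k\<in>UNIV. z k * (eps i * f k i * u i))"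
    unfolding gm_def by (simp add: sum_distrib_left sum_distrib_right algebra_simps)
  also have "\<dots> = (\<Sum>k\<in>UNIV. \<Sum>i\<in>UNIV. z k * (eps i * f k i * u i))" by (rule sum.swap)
  also have "\<dots> = (\<Sum>k\<in>UNIV. z k * gm eps (f k) u)" unfolding gm_def by (simp add: sum_distrib_left)
  finally show ?thesis .
qed

definition RR where "RR c eps u v z = gm eps (br c u v) z - gm eps (br c v z) u + gm eps (br c z u) v"

lemma RR_lin: "RR c eps u v z = (\<Sum>k\<in>UNIV. z k * RR c eps u v (bas k))"
proof -
  have "RR c eps u v z = (\<Sum>k\<in>UNIV. z k * gm eps (br c u v) (bas k))
     - (\<Sum>k\<in>UNIV. z k * gm eps (br c v (bas k)) u) + (\<Sum>k\<in>UNIV. z k * gm eps (br c (bas k) u) v)"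
    unfolding RR_def
    by (subst gm_lin2, subst br_lin2, subst br_lin1, simp only: gm_lin1)
  also have "\<dots> = (\<Sum>k\<in>UNIV. z k * RR c eps u v (bas k))"
    unfolding RR_def by (simp add: sum.distrib sum_subtractf algebra_simps)
  finally show ?thesis .
qed

lemma nabla_eq:
  assumes eps: "\<forall>i. eps i = 1 \<or> eps i = -1"
  shows "nabla c eps u v = (\<lambda>k. eps k * RR c eps u v (bas k) / 2)"
proof -
  have sq: "eps i * eps i = 1" for i using eps by (metis mult_1 mult_minus1 minus_minus)
  show ?thesis
    unfolding nabla_def RR_def[symmetric]
  proof (rule the_equality)
    show "\<forall>z. 2 * gm eps (\<lambda>k. eps k * RR c eps u v (bas k) / 2) z = RR c eps u v z"
    proof
      fix z
      have "2 * gm eps (\<lambda>k. eps k * RR c eps u v (bas k) / 2) z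
          = (\<Sum>i\<in>UNIV. (eps i * eps i) * RR c eps u v (bas i) * z i)"
        unfolding gm_def by (simp add: sum_distrib_left algebra_simps)
      also have "\<dots> = RR c eps u v z" by (subst (2) RR_lin, simp add: sq algebra_simps)
      finally show "2 * gm eps (\<lambda>k. eps k * RR c eps u v (bas k) / 2) z = RR c eps u v z" .
    qed
  next
    fix w assume h: "\<forall>z. 2 * gm eps w z = RR c eps u v z"
    show "w = (\<lambda>k. eps k * RR c eps u v (bas k) / 2)"
    proof
      fix k
      have "2 * (eps k * w k) = RR c eps u v (bas k)" using h[rule_format, of "bas k"] by (simp add: gm_bas)
      hence "eps k * (2 * (eps k * w k)) = eps k * RR c eps u v (bas k)" by simp
      hence "2 * (eps k * eps k) * w k = eps k * RR c eps u v (bas k)" by (simp add: algebra_simps)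
      thus "w k = eps k * RR c eps u v (bas k) / 2" by (simp add: sq)
    qed
  qed
qed

lemma sum_bas: "(\<Sum>a\<in>UNIV. bas i a * f a) = f i"
  by (cases i; simp add: bas_def UNIV_idx)

lemma brL: "br c (\<lambda>k. u k + v k) w l = br c u w l + br c v w l"
  unfolding br_def by (simp add: algebra_simps sum.distrib)
lemma brR: "br c w (\<lambda>k. u k + v k) l = br c w u l + br c w v l"
  unfolding br_def by (simp add: algebra_simps sum.distrib)

lemma lie_anti:
  assumes lie: "lie_constants c"
  shows "c j i l = - c i j l"
proof -
  have z: "br c u u l = 0" for u using lie unfolding lie_constants_def by metis
  have cii: "c i i l = 0" for i using z[of "bas i"] by (simp add: br_bas)
  let ?u = "\<lambda>k. bas i k + bas j k"
  have "br c ?u ?u l = c i i l + c i j l + c j i l + c j j l"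
    by (simp add: brL brR br_bas)
  thus ?thesis using z[of ?u] cii[of i] cii[of j] by simp
qed

lemma br_anti:
  assumes lie: "lie_constants c"
  shows "br c v u = (\<lambda>l. - br c u v l)"
proof
  fix l
  have "br c v u l = (\<Sum>i\<in>UNIV. \<Sum>j\<in>UNIV. - (u j * v i * c j i l))"
    unfolding br_def by (intro sum.cong refl, subst (1) lie_anti[OF lie], simp)
  also have "\<dots> = (\<Sum>j\<in>UNIV. \<Sum>i\<in>UNIV. - (u j * v i * c j i l))" by (rule sum.swap)
  also have "\<dots> = - br c u v l" unfolding br_def by (simp add: sum_negf)
  finally show "br c v u l = - br c u v l" .
qed

lemma gm_neg: "gm eps (\<lambda>l. - f l) z = - gm eps f z"
  unfolding gm_def by (simp add: sum_negf)

lemma RR_sym: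
  assumes lie: "lie_constants c"
  shows "RR c eps E F z + RR c eps F E z = 2 * (gm eps (br c z E) F + gm eps (br c z F) E)"
proof -
  have a1: "gm eps (br c F E) z = - gm eps (br c E F) z" "gm eps (br c E z) F = - gm eps (br c z E) F"
     "gm eps (br c F z) E = - gm eps (br c z F) E"
    by (simp_all only: br_anti[OF lie, of E F] br_anti[OF lie, of E z] br_anti[OF lie, of F z] gm_neg)
  show ?thesis unfolding RR_def a1 by simp
qed

lemma BH_eq:
  assumes lie: "lie_constants c" and eps: "\<forall>i. eps i = 1 \<or> eps i = -1"
  shows "BH c eps E F k = (if k = iX \<or> k = iY then 0 else
     eps k / 2 * (gm eps (br c (bas k) E) F + gm eps (br c (bas k) F) E))"
proof -
  have "BH c eps E F k = (if k = iX \<or> k = iY then 0 else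
     eps k / 4 * (RR c eps E F (bas k) + RR c eps F E (bas k)))"
    unfolding BH_def Vproj_def nabla_eq[OF eps] by (simp add: field_simps)
  thus ?thesis by (simp only: RR_sym[OF lie]) simp
qed

lemma gm_br_H:
  assumes "E \<in> Hsp" "F \<in> Hsp"
  shows "gm eps (br c (bas k) E) F = eps iX * (E iX * c k iX iX + E iY * c k iY iX) * F iX
     + eps iY * (E iX * c k iX iY + E iY * c k iY iY) * F iY"
  using assms by (simp add: Hsp_def gm_def br_bas1 UNIV_idx)

theorem lemma8p1:
  fixes c :: "idx \<Rightarrow> idx \<Rightarrow> idx \<Rightarrow> real" and eps :: "idx \<Rightarrow> real"
    and x1 y1 x2 y2 :: real
  assumes lie: "lie_constants c"
    and eps: "\<forall>i. eps i = 1 \<or> eps i = -1"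
    and AB: "br c (bas iA) (bas iB) = (\<lambda>k. 2 * bas iC k)"
    and CA: "br c (bas iC) (bas iA) = (\<lambda>k. 2 * bas iB k)"
    and BC: "br c (bas iB) (bas iC) = (\<lambda>k. 2 * bas iA k)"
    and TE: "\<forall>E\<in>{iA, iB, iC}. br c (bas iT) (bas E) = (\<lambda>k. 0)"
    and EH: "\<forall>E\<in>{iA, iB, iC}. \<forall>H\<in>{iX, iY}. br c (bas E) (bas H) \<in> Vsp"
    and TX: "br c (bas iT) (bas iX) iX = x1" "br c (bas iT) (bas iX) iY = y1"
    and TY: "br c (bas iT) (bas iY) iX = x2" "br c (bas iT) (bas iY) iY = y2"
    and XY: "br c (bas iX) (bas iY) iY = 0"
  shows "(conformal_fol c eps \<longleftrightarrow> x1 = y2 \<and> eps iX * x2 + eps iY * y1 = 0) \<and>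
         (conformal_fol c eps \<longrightarrow> (semi_riem_fol c eps \<longleftrightarrow> x1 = 0 \<and> y2 = 0))"
proof -
  have sq: "eps i * eps i = 1" for i using eps by (metis mult_1 mult_minus1 minus_minus)
  have nz: "eps i \<noteq> 0" for i using eps by (metis zero_neq_one zero_neq_neg_one)
  have cT: "c iT iX iX = x1" "c iT iX iY = y1" "c iT iY iX = x2" "c iT iY iY = y2"
    using TX TY by (simp_all add: br_bas)
  have cE: "c k h iX = 0 \<and> c k h iY = 0" if "k \<in> {iA, iB, iC}" "h \<in> {iX, iY}" for k h
    using EH that by (auto simp: br_bas Vsp_def)
  define Q where "Q E F = 2 * eps iX * x1 * E iX * F iX + 2 * eps iY * y2 * E iY * F iY
     + (eps iX * x2 + eps iY * y1) * (E iY * F iX + E iX * F iY)" for E F :: vec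
  have BHf: "BH c eps E F = (\<lambda>k. if k = iT then eps iT / 2 * Q E F else 0)"
    if "E \<in> Hsp" "F \<in> Hsp" for E F
  proof
    fix k
    show "BH c eps E F k = (if k = iT then eps iT / 2 * Q E F else 0)"
      unfolding BH_eq[OF lie eps] gm_br_H[OF that] gm_br_H[OF that(2,1)]
      by (cases k) (simp_all add: cE cT Q_def algebra_simps)
  qed
  have gmH: "gm eps E F = eps iX * E iX * F iX + eps iY * E iY * F iY" if "E \<in> Hsp" "F \<in> Hsp" for E F
    using that by (simp add: Hsp_def gm_def UNIV_idx)
  have HX: "bas iX \<in> Hsp" and HY: "bas iY \<in> Hsp" by (simp_all add: Hsp_def bas_def)
  have conf_iff: "conformal_fol c eps \<longleftrightarrow> x1 = y2 \<and> eps iX * x2 + eps iY * y1 = 0"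
  proof
    assume "conformal_fol c eps"
    then obtain V where V: "\<forall>E\<in>Hsp. \<forall>F\<in>Hsp. BH c eps E F = (\<lambda>k. gm eps E F * V k)"
      unfolding conformal_fol_def by blast
    have e1: "eps iT / 2 * Q E F = gm eps E F * V iT" if "E \<in> Hsp" "F \<in> Hsp" for E F
      using fun_cong[OF V[rule_format, OF that], of iT] BHf[OF that] by simp
    have 1: "eps iT * eps iX * x1 = eps iX * V iT" using e1[OF HX HX] unfolding gm_bas by (simp add: Q_def bas_def)
    have 2: "eps iT * eps iY * y2 = eps iY * V iT" using e1[OF HY HY] unfolding gm_bas by (simp add: Q_def bas_def)
    have 3: "eps iT / 2 * (eps iX * x2 + eps iY * y1) = 0" using e1[OF HX HY] unfolding gm_bas by (simp add: Q_def bas_def)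
    have "eps iX * (eps iT * eps iX * x1) = eps iX * (eps iX * V iT)" using 1 by simp
    hence r1: "eps iT * x1 = V iT" by (metis mult.assoc mult.left_commute mult_1 sq)
    have "eps iY * (eps iT * eps iY * y2) = eps iY * (eps iY * V iT)" using 2 by simp
    hence r2: "eps iT * y2 = V iT" by (metis mult.assoc mult.left_commute mult_1 sq)
    show "x1 = y2 \<and> eps iX * x2 + eps iY * y1 = 0" using r1 r2 3 nz[of iT] by (metis mult_cancel_left divide_eq_0_iff mult_eq_0_iff zero_neq_numeral)
  next
    assume h: "x1 = y2 \<and> eps iX * x2 + eps iY * y1 = 0"
    show "conformal_fol c eps"
      unfolding conformal_fol_def
    proof (intro bexI ballI)
      fix E F assume EF: "E \<in> Hsp" "F \<in> Hsp"
      show "BH c eps E F = (\<lambda>k. gm eps E F * (if k = iT then eps iT * x1 else 0))"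
        unfolding BHf[OF EF] gmH[OF EF] using h by (auto simp: Q_def algebra_simps)
    qed (simp add: Vsp_def)
  qed
  have semi: "semi_riem_fol c eps \<longleftrightarrow> x1 = 0 \<and> y2 = 0" if cf: "conformal_fol c eps"
  proof
    assume "semi_riem_fol c eps"
    hence z: "eps iT / 2 * Q E F = 0" if "E \<in> Hsp" "F \<in> Hsp" for E F
      using BHf[OF that] that unfolding semi_riem_fol_def by (metis (mono_tags))
    show "x1 = 0 \<and> y2 = 0" using z[OF HX HX] z[OF HY HY] nz[of iT] nz[of iX] nz[of iY]
      by (simp add: Q_def bas_def)
  next
    assume h: "x1 = 0 \<and> y2 = 0"
    have h2: "eps iX * x2 + eps iY * y1 = 0" using cf conf_iff by blast
    show "semi_riem_fol c eps" unfolding semi_riem_fol_def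
    proof (intro ballI)
      fix E F assume EF: "E \<in> Hsp" "F \<in> Hsp"
      have q0: "Q E F = 0" unfolding Q_def using h h2 by simp
      show "BH c eps E F = (\<lambda>k. 0)" unfolding BHf[OF EF] q0 by (rule ext) simp
    qed
  qed
  show ?thesis using conf_iff semi by blast
qed

end
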